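(* Let $\mathfrak g$ be a complex vector space equipped with a bilinear multiplication $[\ ,\ ]:\mathfrak g\otimes\mathfrak g\to\mathfrak g$, and let $\tilde{\mathfrak g}=\mathfrak g\oplus\mathbb C$. For $\lambda\in\mathbb C$ define $\mathfrak R(\lambda):\tilde{\mathfrak g}\otimes\tilde{\mathfrak g}\to\tilde{\mathfrak g}\otimes\tilde{\mathfrak g}$ by $\mathfrak R(\lambda)\big((x+\alpha)\otimes(y+\beta)\big)=(y+\beta)\otimes(x+\alpha)+[x,y]\otimes\lambda$ for $x,y\in\mathfrak g$, $\alpha,\beta\in\mathbb C$. Let $\sigma:\tilde{\mathfrak g}\otimes\tilde{\mathfrak g}\to\tilde{\mathfrak g}\otimes\tilde{\mathfrak g}$ be the flip $u\otimes v\mapsto v\otimes u$ and set $\mathfrak R_{21}(\lambda)=\sigma\,\mathfrak R(\lambda)\,\sigma$. Then for every $\lambda\in\mathbb C$, $$\mathfrak R(\lambda)\mathfrak R_{21}(-\lambda)=\mathfrak R_{21}(\lambda)\mathfrak R(-\lambda)=1.$$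
   Context: All tensor products are over $\mathbb C$; $\lambda$ and $[x,y]$ are regarded as elements of $\tilde{\mathfrak g}=\mathfrak g\oplus\mathbb C$ via the obvious inclusions. *)

theory Defs
  imports "HOL-Analysis.Analysis"
begin

text \<open>Complex vector spaces are modelled with the generic locale vector_space of
HOL (scalar multiplication given as an explicit function with complex scalars).\<close>

text \<open>Scalar multiplication on g~ = g (+) C, elements written as pairs (x, alpha).\<close>
definition gt_scale :: "(complex \<Rightarrow> 'g \<Rightarrow> 'g) \<Rightarrow> complex \<Rightarrow> 'g \<times> complex \<Rightarrow> 'g \<times> complex" where
  "gt_scale s c p = (s c (fst p), c * snd p)"

definition bilin :: "('k::field \<Rightarrow> 'a::ab_group_add \<Rightarrow> 'a) \<Rightarrow> ('k \<Rightarrow> 'b::ab_group_add \<Rightarrow> 'b)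
    \<Rightarrow> ('k \<Rightarrow> 'c::ab_group_add \<Rightarrow> 'c) \<Rightarrow> ('a \<Rightarrow> 'b \<Rightarrow> 'c) \<Rightarrow> bool" where
  "bilin s1 s2 s3 B \<longleftrightarrow>
     (\<forall>y. Vector_Spaces.linear s1 s3 (\<lambda>x. B x y)) \<and> (\<forall>x. Vector_Spaces.linear s2 s3 (B x))"

text \<open>Over a field this
characterizes the tensor product up to unique isomorphism.\<close>
definition is_tensor_product :: "(complex \<Rightarrow> 'v::ab_group_add \<Rightarrow> 'v) \<Rightarrow> (complex \<Rightarrow> 't::ab_group_add \<Rightarrow> 't)
    \<Rightarrow> ('v \<Rightarrow> 'v \<Rightarrow> 't) \<Rightarrow> bool" where
  "is_tensor_product sv st tp \<longleftrightarrow>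
     vector_space st \<and> bilin sv sv st tp \<and>
     module.span st {tp u v | u v. True} = UNIV \<and>
     (\<forall>B. bilin sv sv (*) B \<longrightarrow>
        (\<exists>f. Vector_Spaces.linear st (*) f \<and> (\<forall>u v. f (tp u v) = B u v)))"

end

theory Submission
  imports Defs
begin

lemma add_zero_aux: "(f::'a::zero \<Rightarrow> 'b::ab_group_add) 0 = f 0 + f 0 \<Longrightarrow> f 0 = 0"
  by (metis add_cancel_left_right)

theorem lemma1p1p2:
  fixes sg :: "complex \<Rightarrow> 'g::ab_group_add \<Rightarrow> 'g"
    and br :: "'g \<Rightarrow> 'g \<Rightarrow> 'g"
    and st :: "complex \<Rightarrow> 't::ab_group_add \<Rightarrow> 't"
    and tp :: "'g \<times> complex \<Rightarrow> 'g \<times> complex \<Rightarrow> 't"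
    and R :: "complex \<Rightarrow> 't \<Rightarrow> 't"
    and \<sigma> :: "'t \<Rightarrow> 't"
  assumes g_vs: "vector_space sg"
    and br_bilin: "bilin sg sg sg br"
    and tensor: "is_tensor_product (gt_scale sg) st tp"
    and R_lin: "\<And>lam. Vector_Spaces.linear st st (R lam)"
    and R_def: "\<And>lam x \<alpha> y \<beta>. R lam (tp (x, \<alpha>) (y, \<beta>)) = tp (y, \<beta>) (x, \<alpha>) + tp (br x y, 0) (0, lam)"
    and \<sigma>_lin: "Vector_Spaces.linear st st \<sigma>"
    and \<sigma>_def: "\<And>u v. \<sigma> (tp u v) = tp v u"
  shows "\<forall>lam. R lam \<circ> (\<sigma> \<circ> R (-lam) \<circ> \<sigma>) = id \<and> (\<sigma> \<circ> R lam \<circ> \<sigma>) \<circ> R (-lam) = id"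
proof
  fix lam :: complex
  have vs: "vector_space st" and span: "module.span st {tp u v | u v. True} = UNIV"
    and tpb: "bilin (gt_scale sg) (gt_scale sg) st tp"
    using tensor unfolding is_tensor_product_def by auto
  interpret vp: vector_space_pair st st using vs by (simp add: vector_space_pair_def)
  have tpl: "tp (a + b) v = tp a v + tp b v" for a b v
  proof -
    have "Vector_Spaces.linear (gt_scale sg) st (\<lambda>x. tp x v)" using tpb unfolding bilin_def by blast
    thus ?thesis unfolding Vector_Spaces.linear_iff by blast
  qed
  have tpr: "tp u (a + b) = tp u a + tp u b" for u a b
  proof -
    have "Vector_Spaces.linear (gt_scale sg) st (tp u)" using tpb unfolding bilin_def by blast
    thus ?thesis unfolding Vector_Spaces.linear_iff by blast
  qed
  have brl: "br (a + b) v = br a v + br b v" for a b v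
    using br_bilin unfolding bilin_def Vector_Spaces.linear_iff by auto
  have Radd: "R l (a + b) = R l a + R l b" for l a b
    using R_lin[of l] unfolding Vector_Spaces.linear_iff by auto
  have sadd: "\<sigma> (a + b) = \<sigma> a + \<sigma> b" for a b
    using \<sigma>_lin unfolding Vector_Spaces.linear_iff by auto
  have Rdiff: "R l (a - b) = R l a - R l b" for l a b
    using Radd[of l "a - b" b] by (simp add: eq_diff_eq)
  have sdiff: "\<sigma> (a - b) = \<sigma> a - \<sigma> b" for a b
    using sadd[of "a - b" b] by (simp add: eq_diff_eq)
  have br0: "br 0 v = 0" for v
    using add_zero_aux[of "\<lambda>a. br a v"] brl[of 0 0 v] by simp
  have tp0: "tp 0 v = 0" for v
    using add_zero_aux[of "\<lambda>a. tp a v"] tpl[of 0 0 v] by simp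
  have tpr0: "tp u 0 = 0" for u
    using add_zero_aux[of "\<lambda>a. tp u a"] tpr[of u 0 0] by simp
  have tpneg: "tp u (- a) = - tp u a" for u a
    using tpr[of u a "-a"] tpr0[of u] by (simp add: eq_neg_iff_add_eq_0 add.commute)
  have negp: "((0::'g), - lam) = - (0, lam)" by simp
  have tplneg: "tp (0, - lam) v = - tp (0, lam) v" for v
  proof -
    have "tp (0, lam) v + tp (0, - lam) v = 0"
      using tpl[of "(0,lam)" "(0,-lam)" v] tp0[of v] by (simp add: zero_prod_def)
    thus ?thesis by (simp add: eq_neg_iff_add_eq_0 add.commute)
  qed
  have z: "((0::'g), (0::complex)) = 0" by (simp add: zero_prod_def)
  have C: "Vector_Spaces.linear st st (g \<circ> f)" if "Vector_Spaces.linear st st f" "Vector_Spaces.linear st st g" for f g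
    using Vector_Spaces.linear_compose[OF that] .
  have lin1: "Vector_Spaces.linear st st (R lam \<circ> (\<sigma> \<circ> R (-lam) \<circ> \<sigma>))"
    by (intro C R_lin \<sigma>_lin)
  have lin2: "Vector_Spaces.linear st st ((\<sigma> \<circ> R lam \<circ> \<sigma>) \<circ> R (-lam))"
    by (intro C R_lin \<sigma>_lin)
  have linid: "Vector_Spaces.linear st st id"
    using vs unfolding Vector_Spaces.linear_iff by simp
  have e1: "(R lam \<circ> (\<sigma> \<circ> R (-lam) \<circ> \<sigma>)) b = id b" if bB: "b \<in> {tp u v | u v. True}" for b
  proof -
    obtain x \<alpha> y \<beta> where b: "b = tp (x, \<alpha>) (y, \<beta>)" using bB by (auto simp del: prod.collapse)
    show ?thesis using b
      by (simp add: R_def \<sigma>_def Radd sadd Rdiff sdiff br0 tplneg tpneg z tp0)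
  qed
  have e2: "((\<sigma> \<circ> R lam \<circ> \<sigma>) \<circ> R (-lam)) b = id b" if bB: "b \<in> {tp u v | u v. True}" for b
  proof -
    obtain x \<alpha> y \<beta> where b: "b = tp (x, \<alpha>) (y, \<beta>)" using bB by (auto simp del: prod.collapse)
    show ?thesis using b
      by (simp add: R_def \<sigma>_def Radd sadd Rdiff sdiff br0 tplneg tpneg z tp0)
  qed
  show "R lam \<circ> (\<sigma> \<circ> R (-lam) \<circ> \<sigma>) = id \<and> (\<sigma> \<circ> R lam \<circ> \<sigma>) \<circ> R (-lam) = id"
  proof
    show "R lam \<circ> (\<sigma> \<circ> R (-lam) \<circ> \<sigma>) = id"
      proof
      fix w
      have "w \<in> vp.vs1.span {tp u v |u v. True}" using span by simp
      from vp.linear_eq_on[OF lin1 linid this e1] show "(R lam \<circ> (\<sigma> \<circ> R (-lam) \<circ> \<sigma>)) w = id w" .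
    qed
    show "(\<sigma> \<circ> R lam \<circ> \<sigma>) \<circ> R (-lam) = id"
      proof
      fix w
      have "w \<in> vp.vs1.span {tp u v |u v. True}" using span by simp
      from vp.linear_eq_on[OF lin2 linid this e2] show "((\<sigma> \<circ> R lam \<circ> \<sigma>) \<circ> R (-lam)) w = id w" .
    qed
  qed
qed

end
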